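(* Let $E$ be a Banach space, $Y$ a Banach lattice, $1\le q\le p\le\infty$ and $T:E\to Y$ a bounded linear operator. Then $T$ is positive strongly $(p,q)$-summing if and only if there exists $C>0$ such that for all $n\in\mathbb{N}$ and all $x_1,\dots,x_n\in E$, $$\|(T(x_i))_{i=1}^n\|_{\ell_p^{\pi}(Y)}\le C\|(x_i)_{i=1}^n\|_{q}.$$
   Context: $\|(x_i)_{i=1}^n\|_q=(\sum_i\|x_i\|^q)^{1/q}$ (sup norm if $q=\infty$); $p^{\ast}$ is the conjugate exponent of $p$. For a sequence $(y_i^{\ast})$ in $Y^{\ast}$, $\|(y_i^{\ast})\|_{p^{\ast},\omega}=\sup_{y\in B_{Y}}\|(\langle y_i^{\ast},y\rangle)_i\|_{p^{\ast}}$. For a Banach lattice $Y$, $\ell_{r,|\omega|}(Y^{\ast})$ is the Banach lattice of sequences $(y_n^{\ast})$ in $Y^{\ast}$ with $\|(y_n^{\ast})\|_{r,|\omega|}=\sup_{y\in B_Y\cap Y_+}\|(\langle|y_n^{\ast}|,y\rangle)_n\|_{r}<\infty$. For $1<p\le\infty$, $\ell_p^{\pi}(Y)$ is the space of sequences $(y_n)$ in $Y$ with $\|(y_n)\|_{\ell_p^{\pi}(Y)}=\sup\sum_n\langle y_n^{\ast},|y_n|\rangle<\infty$, the supremum over positive $(y_n^{\ast})$ in the unit ball of $\ell_{p^{\ast},|\omega|}(Y^{\ast})$ (finite sequences padded with zeros); by convention $\ell_1^{\pi}(Y)=\ell_1(Y)$. An operator $T:E\to Y$ is positive strongly $(p,q)$-summing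 if there is $C>0$ such that $\sum_{i=1}^n|\langle T(x_i),y_i^{\ast}\rangle|\le C\|(x_i)_{i=1}^n\|_q\,\|(y_i^{\ast})_{i=1}^n\|_{p^{\ast},\omega}$ for all $n$, all $x_i\in E$ and all positive $y_i^{\ast}\in Y^{\ast}$. *)

theory Defs
  imports Complex_Main "HOL-Library.Extended_Real"
begin

definition lmod :: "'a::{lattice, uminus} \<Rightarrow> 'a" where
  "lmod x = sup x (- x)"

class banach_lattice = banach + ordered_real_vector + lattice +
  assumes lattice_norm: "sup x (- x) \<le> sup y (- y) \<Longrightarrow> norm x \<le> norm y"

definition dual_elem :: "('y::real_normed_vector \<Rightarrow> real) \<Rightarrow> bool" where
  "dual_elem f \<longleftrightarrow> bounded_linear f"

definition positive_functional :: "('y::{real_normed_vector,order} \<Rightarrow> real) \<Rightarrow> bool" where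
  "positive_functional f \<longleftrightarrow> (\<forall>y. 0 \<le> y \<longrightarrow> 0 \<le> f y)"

definition conj_exp :: "ereal \<Rightarrow> ereal" where
  "conj_exp p = (if p = 1 then \<infinity> else if p = \<infinity> then 1
                 else ereal (real_of_ereal p / (real_of_ereal p - 1)))"

text \<open>The norm \<open>\<parallel>(x_i)_{i=1}^n\<parallel>_r\<close> of a finite sequence (indices 0..n-1).\<close>

definition lpnorm :: "ereal \<Rightarrow> nat \<Rightarrow> (nat \<Rightarrow> 'a::real_normed_vector) \<Rightarrow> real" where
  "lpnorm r n x = (if r = \<infinity> then Max (insert 0 ((\<lambda>i. norm (x i)) ` {..<n}))
                   else (\<Sum>i<n. norm (x i) powr real_of_ereal r) powr (1 / real_of_ereal r))"

definition weak_norm :: "ereal \<Rightarrow> nat \<Rightarrow> (nat \<Rightarrow> 'y::real_normed_vector \<Rightarrow> real) \<Rightarrow> real" where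
  "weak_norm r n ys = (SUP y\<in>{y. norm y \<le> 1}. lpnorm r n (\<lambda>i. ys i y))"

text \<open>For positive \<open>(y_i^* )\<close> (so that \<open>|y_i^*| = y_i^*\<close>), the norm of \<open>\<ell>_{r,|\<omega>|}(Y^* )\<close>:
\<open>sup_{y \<in> B_Y \<inter> Y_+} \<parallel>(<y_i^*, y>)_i\<parallel>_r\<close>.\<close>

definition abs_weak_norm_pos :: "ereal \<Rightarrow> nat \<Rightarrow> (nat \<Rightarrow> 'y::{real_normed_vector,order} \<Rightarrow> real) \<Rightarrow> real" where
  "abs_weak_norm_pos r n ys = (SUP y\<in>{y. norm y \<le> 1 \<and> 0 \<le> y}. lpnorm r n (\<lambda>i. ys i y))"

text \<open>Norm of the finite sequence \<open>(y_i)_{i<n}\<close> (padded with zeros) in \<open>\<ell>_p^\<pi>(Y)\<close>;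
\<open>\<ell>_1^\<pi>(Y) = \<ell>_1(Y)\<close>.\<close>

definition lp_pi_norm :: "ereal \<Rightarrow> nat \<Rightarrow> (nat \<Rightarrow> 'y::banach_lattice) \<Rightarrow> real" where
  "lp_pi_norm p n y =
     (if p = 1 then (\<Sum>i<n. norm (y i))
      else (SUP g\<in>{g. (\<forall>i. dual_elem (g i) \<and> positive_functional (g i))
                      \<and> (\<forall>i\<ge>n. g i = (\<lambda>_. 0))
                      \<and> abs_weak_norm_pos (conj_exp p) n g \<le> 1}.
              \<Sum>i<n. g i (lmod (y i))))"

definition pos_strongly_summing ::
  "ereal \<Rightarrow> ereal \<Rightarrow> ('e::real_normed_vector \<Rightarrow> 'y::banach_lattice) \<Rightarrow> bool" where
  "pos_strongly_summing p q T \<longleftrightarrow>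
     (\<exists>C>0. \<forall>n (x :: nat \<Rightarrow> 'e) (ys :: nat \<Rightarrow> 'y \<Rightarrow> real).
        (\<forall>i<n. dual_elem (ys i) \<and> positive_functional (ys i)) \<longrightarrow>
        (\<Sum>i<n. \<bar>ys i (T (x i))\<bar>) \<le> C * lpnorm q n x * weak_norm (conj_exp p) n ys)"

end

theory Submission
  imports Defs "HOL-Library.Lattice_Algebras"
begin


context banach_lattice begin
subclass lattice_ab_group_add ..
end

lemma lmod_nonneg: "0 \<le> lmod (y::'y::banach_lattice)"
proof -
  have "y \<le> lmod y" "- y \<le> lmod y" by (auto simp: lmod_def)
  then have "0 \<le> lmod y + lmod y" using add_mono by fastforce
  then show ?thesis by simp
qed

lemma lmod_prts: "lmod (y::'y::banach_lattice) = pprt y - nprt y"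
proof -
  have "pprt y - nprt y = pprt y + pprt (- y)" by (simp add: pprt_neg)
  also have "\<dots> = sup (y + sup (-y) 0) (0 + sup (-y) 0)"
    unfolding pprt_def by (rule add_sup_distrib_right)
  also have "\<dots> = sup (sup 0 y) (sup (-y) 0)"
    by (simp add: add_sup_distrib_left)
  also have "\<dots> = sup (lmod y) 0" by (simp add: lmod_def ac_simps)
  also have "\<dots> = lmod y" using lmod_nonneg[of y] by (simp add: sup_absorb1)
  finally show ?thesis by simp
qed

lemma lmod_lmod: "lmod (lmod (y::'y::banach_lattice)) = lmod y"
proof -
  have "- lmod y \<le> lmod y" using lmod_nonneg[of y]
    by (meson neg_le_0_iff_le order_trans)
  then show ?thesis by (simp add: lmod_def[of "lmod y"] sup_absorb1)
qed

lemma norm_lmod: "norm (lmod (y::'y::banach_lattice)) = norm y"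
proof -
  have e: "sup (lmod y) (- lmod y) = sup y (-y)" using lmod_lmod[of y] by (simp add: lmod_def)
  show ?thesis using lattice_norm[of "lmod y" y] lattice_norm[of y "lmod y"] e by simp
qed

lemma inf_prts: "inf (pprt (y::'y::banach_lattice)) (- nprt y) = 0"
proof -
  have "pprt y + (- nprt y) = sup (pprt y) (- nprt y) + inf (pprt y) (- nprt y)"
    by (rule add_eq_inf_sup)
  moreover have "sup (pprt y) (- nprt y) = lmod y"
  proof -
    have "sup (pprt y) (- nprt y) = sup (sup y (-y)) 0"
      by (simp add: pprt_def flip: pprt_neg) (simp add: pprt_def ac_simps)
    then show ?thesis using lmod_nonneg[of y] by (simp add: lmod_def sup_absorb1)
  qed
  ultimately show ?thesis using lmod_prts[of y] by simp
qed

lemma scaleR_inf: "(c::real) > 0 \<Longrightarrow> c *\<^sub>R inf a b = inf (c *\<^sub>R a) (c *\<^sub>R (b::'y::banach_lattice))"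
proof (rule antisym)
  assume c: "c > 0"
  show "c *\<^sub>R inf a b \<le> inf (c *\<^sub>R a) (c *\<^sub>R b)"
    using c by (simp add: scaleR_left_mono)
  have "inverse c *\<^sub>R inf (c *\<^sub>R a) (c *\<^sub>R b) \<le> a"
    using scaleR_left_mono[OF inf_le1[of "c *\<^sub>R a" "c *\<^sub>R b"], of "inverse c"] c by simp
  moreover have "inverse c *\<^sub>R inf (c *\<^sub>R a) (c *\<^sub>R b) \<le> b"
    using scaleR_left_mono[OF inf_le2[of "c *\<^sub>R a" "c *\<^sub>R b"], of "inverse c"] c by simp
  ultimately have "inverse c *\<^sub>R inf (c *\<^sub>R a) (c *\<^sub>R b) \<le> inf a b" by simp
  from scaleR_left_mono[OF this, of c] c
  show "inf (c *\<^sub>R a) (c *\<^sub>R b) \<le> c *\<^sub>R inf a b" by simp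
qed

lemma inf_disj_scale:
  fixes a b :: "'y::banach_lattice"
  assumes "0 \<le> a" "0 \<le> b" "inf a b = 0" "0 \<le> t"
  shows "inf a (t *\<^sub>R b) = 0"
proof (cases "t \<le> 1")
  case True
  have "inf a (t *\<^sub>R b) \<le> inf a b"
    using scaleR_right_mono[OF True assms(2)] by (simp add: le_infI2)
  moreover have "0 \<le> inf a (t *\<^sub>R b)" using assms by (simp add: scaleR_nonneg_nonneg)
  ultimately show ?thesis using assms(3) by simp
next
  case False
  then have t: "t > 0" "1 \<le> t" by auto
  have "a \<le> t *\<^sub>R a" using scaleR_right_mono[OF t(2) assms(1)] by simp
  then have "inf a (t *\<^sub>R b) \<le> inf (t *\<^sub>R a) (t *\<^sub>R b)" by (simp add: le_infI1)
  also have "\<dots> = t *\<^sub>R inf a b" by (rule scaleR_inf[OF t(1), symmetric])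
  finally have "inf a (t *\<^sub>R b) \<le> 0" using assms(3) by simp
  moreover have "0 \<le> inf a (t *\<^sub>R b)" using assms by (simp add: scaleR_nonneg_nonneg)
  ultimately show ?thesis by simp
qed

lemma inf_add_le:
  fixes a b c :: "'y::banach_lattice"
  assumes "0 \<le> a" "0 \<le> b" "0 \<le> c"
  shows "inf (a + b) c \<le> inf a c + inf b c"
proof -
  have "inf a c + inf b c = inf (inf (a + b) (a + c)) (inf (c + b) (c + c))"
    by (simp add: add_inf_distrib_left add_inf_distrib_right inf.assoc inf.commute inf.left_commute)
  moreover have "c \<le> a + c" "c \<le> c + b" "c \<le> c + c" using assms
    by (simp_all add: add_increasing add_increasing2)
  ultimately show ?thesis
    by (simp add: le_infI2 le_infI1 inf.coboundedI1 inf.coboundedI2)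
qed



definition band :: "('y::banach_lattice \<Rightarrow> real) \<Rightarrow> 'y \<Rightarrow> 'y \<Rightarrow> real" where
  "band g u z = (SUP t\<in>{0::real..}. g (inf z (t *\<^sub>R u)))"

definition bandf :: "('y::banach_lattice \<Rightarrow> real) \<Rightarrow> 'y \<Rightarrow> 'y \<Rightarrow> real" where
  "bandf g u z = band g u (pprt z) - band g u (- nprt z)"

locale posfun =
  fixes g :: "'y::banach_lattice \<Rightarrow> real" and u :: 'y
  assumes bl: "bounded_linear g" and pos: "positive_functional g" and u: "0 \<le> u"
begin

lemma gl: "linear g" using bl by (rule bounded_linear.linear)
lemma gdiff: "g (a - b) = g a - g b" using gl by (rule real_vector.linear_diff)
lemma gadd: "g (a + b) = g a + g b" using gl by (rule real_vector.linear_add)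
lemma gscale: "g (c *\<^sub>R a) = c * g a" using linear_cmul[OF gl] by simp
lemma gzero: "g 0 = 0" using gl by (rule real_vector.linear_0)
lemma gminus: "g (- a) = - g a" using gl by (rule real_vector.linear_neg)

lemma gmono: "a \<le> b \<Longrightarrow> g a \<le> g b"
  using pos gdiff[of b a] unfolding positive_functional_def
  by (metis diff_ge_0_iff_ge)

lemma gnonneg: "0 \<le> a \<Longrightarrow> 0 \<le> g a"
  using pos unfolding positive_functional_def by blast

lemma bdd: "0 \<le> z \<Longrightarrow> bdd_above ((\<lambda>t. g (inf z (t *\<^sub>R u))) ` {0..})"
  by (rule bdd_aboveI2[of _ _ "g z"]) (auto intro: gmono)

lemma band_le: "0 \<le> z \<Longrightarrow> band g u z \<le> g z"
  unfolding band_def by (rule cSUP_least) (auto intro: gmono)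

lemma band_ge: "0 \<le> z \<Longrightarrow> 0 \<le> t \<Longrightarrow> g (inf z (t *\<^sub>R u)) \<le> band g u z"
  unfolding band_def by (rule cSUP_upper[OF _ bdd]) auto

lemma band_nonneg: "0 \<le> z \<Longrightarrow> 0 \<le> band g u z"
  using band_ge[of z 0] u by (simp add: inf_absorb2 gzero)

lemma band_self: "band g u u = g u"
  using band_ge[of u 1] band_le[of u] u by simp

lemma band_disj: "0 \<le> w \<Longrightarrow> inf w u = 0 \<Longrightarrow> band g u w = 0"
  unfolding band_def using inf_disj_scale[OF _ u] gzero by simp

lemma band_0: "band g u 0 = 0"
  using band_le[of 0] band_nonneg[of 0] gzero by simp

lemma band_add:
  assumes a: "0 \<le> a" and b: "0 \<le> b"
  shows "band g u (a + b) = band g u a + band g u b"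
proof (rule antisym)
  show "band g u (a + b) \<le> band g u a + band g u b"
    unfolding band_def[of g u "a+b"]
  proof (rule cSUP_least)
    fix t :: real assume t: "t \<in> {0..}"
    have "g (inf (a + b) (t *\<^sub>R u)) \<le> g (inf a (t *\<^sub>R u) + inf b (t *\<^sub>R u))"
      by (rule gmono, rule inf_add_le) (use a b u t in \<open>auto simp: scaleR_nonneg_nonneg\<close>)
    also have "\<dots> \<le> band g u a + band g u b"
      using band_ge[OF a, of t] band_ge[OF b, of t] t by (simp add: gadd)
    finally show "g (inf (a + b) (t *\<^sub>R u)) \<le> band g u a + band g u b" .
  qed simp
next
  have ab: "0 \<le> a + b" using a b by simp
  have key: "g (inf a (t1 *\<^sub>R u)) + g (inf b (t2 *\<^sub>R u)) \<le> band g u (a + b)"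
    if t1: "0 \<le> t1" and t2: "0 \<le> t2" for t1 t2
  proof -
    define t where "t = max t1 t2"
    have m1: "t1 *\<^sub>R u \<le> t *\<^sub>R u" "t2 *\<^sub>R u \<le> t *\<^sub>R u"
      using u by (auto simp: t_def intro!: scaleR_right_mono)
    have "g (inf a (t1 *\<^sub>R u)) + g (inf b (t2 *\<^sub>R u)) \<le> g (inf a (t *\<^sub>R u)) + g (inf b (t *\<^sub>R u))"
      using m1 by (intro add_mono gmono) (auto intro: le_infI2)
    also have "\<dots> = g (inf a (t *\<^sub>R u) + inf b (t *\<^sub>R u))" by (simp add: gadd)
    also have "\<dots> \<le> g (inf (a + b) ((2 * t) *\<^sub>R u))"
    proof (rule gmono)
      have "inf a (t *\<^sub>R u) + inf b (t *\<^sub>R u) \<le> t *\<^sub>R u + t *\<^sub>R u"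
        by (intro add_mono) auto
      also have "\<dots> = (2 * t) *\<^sub>R u" by (simp add: scaleR_add_left[symmetric])
      finally show "inf a (t *\<^sub>R u) + inf b (t *\<^sub>R u) \<le> inf (a + b) ((2 * t) *\<^sub>R u)"
        by (simp add: add_mono le_infI1)
    qed
    also have "\<dots> \<le> band g u (a + b)" using band_ge[OF ab, of "2*t"] t1 by (simp add: t_def)
    finally show ?thesis .
  qed
  have "band g u a \<le> band g u (a + b) - band g u b"
    unfolding band_def[of g u a]
  proof (rule cSUP_least)
    fix t1 :: real assume t1: "t1 \<in> {0..}"
    have "band g u b \<le> band g u (a + b) - g (inf a (t1 *\<^sub>R u))"
      unfolding band_def[of g u b]
      by (rule cSUP_least) (use key t1 in \<open>auto simp: algebra_simps\<close>)
    then show "g (inf a (t1 *\<^sub>R u)) \<le> band g u (a + b) - band g u b" by simp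
  qed simp
  then show "band g u a + band g u b \<le> band g u (a + b)" by simp
qed

lemma band_scale_le:
  assumes c: "c > 0" and z: "0 \<le> z"
  shows "band g u (c *\<^sub>R z) \<le> c * band g u z"
  unfolding band_def[of g u "c *\<^sub>R z"]
proof (rule cSUP_least)
  fix t :: real assume t: "t \<in> {0..}"
  have "inf (c *\<^sub>R z) (t *\<^sub>R u) = c *\<^sub>R inf z ((t / c) *\<^sub>R u)"
    using scaleR_inf[OF c, of z "(t / c) *\<^sub>R u"] c by simp
  then have "g (inf (c *\<^sub>R z) (t *\<^sub>R u)) = c * g (inf z ((t / c) *\<^sub>R u))" by (simp add: gscale)
  also have "\<dots> \<le> c * band g u z" using band_ge[OF z, of "t / c"] c t by simp
  finally show "g (inf (c *\<^sub>R z) (t *\<^sub>R u)) \<le> c * band g u z" .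
qed simp

lemma band_scale:
  assumes c: "c \<ge> 0" and z: "0 \<le> z"
  shows "band g u (c *\<^sub>R z) = c * band g u z"
proof (cases "c = 0")
  case True then show ?thesis by (simp add: band_0)
next
  case False
  then have c: "c > 0" using c by simp
  have "band g u z = band g u (inverse c *\<^sub>R (c *\<^sub>R z))" using c by simp
  also have "\<dots> \<le> inverse c * band g u (c *\<^sub>R z)"
    using c z by (intro band_scale_le) (auto simp: scaleR_nonneg_nonneg)
  finally have "c * band g u z \<le> band g u (c *\<^sub>R z)" using c by (simp add: field_simps)
  with band_scale_le[OF c z] show ?thesis by simp
qed

lemma bandf_diff:
  assumes a: "0 \<le> a" and b: "0 \<le> b"
  shows "bandf g u (a - b) = band g u a - band g u b"
proof -
  let ?z = "a - b"
  have "pprt ?z + nprt ?z = a - b" by (simp flip: prts)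
  then have "pprt ?z + b = a + (- nprt ?z)" by (simp add: algebra_simps)
  then have "band g u (pprt ?z) + band g u b = band g u a + band g u (- nprt ?z)"
    using band_add a b by (metis nprt_le_zero neg_0_le_iff_le zero_le_pprt)
  then show ?thesis unfolding bandf_def by simp
qed

lemma bandf_abs: "\<bar>bandf g u x\<bar> \<le> g (lmod x)"
proof -
  have pn: "0 \<le> pprt x" "0 \<le> - nprt x" by simp_all
  have "\<bar>bandf g u x\<bar> \<le> g (pprt x) + g (- nprt x)"
    using band_le[OF pn(1)] band_le[OF pn(2)] band_nonneg[OF pn(1)] band_nonneg[OF pn(2)]
    unfolding bandf_def by (simp add: abs_le_iff)
  also have "\<dots> = g (lmod x)" by (simp add: lmod_prts gdiff gminus)
  finally show ?thesis .
qed

lemma bandf_bl: "bounded_linear (bandf g u)"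
proof -
  obtain K where K: "\<And>x. norm (g x) \<le> norm x * K" using bl bounded_linear.bounded by blast
  have pn: "\<And>x. 0 \<le> pprt x" "\<And>x. 0 \<le> - nprt x" by simp_all
  have bf: "bandf g u x = band g u (pprt x) - band g u (- nprt x)" for x by (simp add: bandf_def)
  show ?thesis
  proof (rule bounded_linear_intro)
    fix x y :: 'y
    have "(pprt x + pprt y) - ((- nprt x) + (- nprt y)) = (pprt x + nprt x) + (pprt y + nprt y)"
      by (simp add: algebra_simps)
    then have "x + y = (pprt x + pprt y) - ((- nprt x) + (- nprt y))"
      using prts[of x] prts[of y] by metis
    then have "bandf g u (x + y) = bandf g u ((pprt x + pprt y) - ((- nprt x) + (- nprt y)))" by simp
    also have "\<dots> = band g u (pprt x + pprt y) - band g u ((- nprt x) + (- nprt y))"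
      by (rule bandf_diff; rule add_nonneg_nonneg; simp)
    also have "\<dots> = bandf g u x + bandf g u y"
      using band_add[of "pprt x" "pprt y"] band_add[of "- nprt x" "- nprt y"]
      by (simp only: bf) simp
    finally show "bandf g u (x + y) = bandf g u x + bandf g u y" .
  next
    fix r and x :: 'y
    show "bandf g u (r *\<^sub>R x) = r *\<^sub>R bandf g u x"
    proof (cases "r \<ge> 0")
      case True
      have "r *\<^sub>R x = r *\<^sub>R pprt x - r *\<^sub>R (- nprt x)"
        using prts[of x] by (metis add_uminus_conv_diff scaleR_right_diff_distrib minus_minus)
      then have "bandf g u (r *\<^sub>R x) = bandf g u (r *\<^sub>R pprt x - r *\<^sub>R (- nprt x))" by simp
      also have "\<dots> = band g u (r *\<^sub>R pprt x) - band g u (r *\<^sub>R (- nprt x))"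
        by (rule bandf_diff) (use True in \<open>auto intro: scaleR_nonneg_nonneg scaleR_nonneg_nonpos scaleR_nonpos_nonpos scaleR_nonpos_nonneg\<close>)
      also have "\<dots> = r * band g u (pprt x) - r * band g u (- nprt x)"
        using band_scale[OF True, of "pprt x"] band_scale[OF True, of "- nprt x"] by simp
      also have "\<dots> = r *\<^sub>R bandf g u x" by (simp add: bf algebra_simps)
      finally show ?thesis .
    next
      case False
      then have r: "- r \<ge> 0" by simp
      have "r *\<^sub>R x = (- r) *\<^sub>R (- nprt x) - (- r) *\<^sub>R pprt x"
        using prts[of x] by (metis add_uminus_conv_diff scaleR_right_diff_distrib minus_minus
            scaleR_minus_left scaleR_minus_right minus_diff_eq add.commute)
      then have "bandf g u (r *\<^sub>R x) = bandf g u ((- r) *\<^sub>R (- nprt x) - (- r) *\<^sub>R pprt x)" by simp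
      also have "\<dots> = band g u ((- r) *\<^sub>R (- nprt x)) - band g u ((- r) *\<^sub>R pprt x)"
        by (rule bandf_diff) (use r in \<open>auto intro: scaleR_nonneg_nonneg scaleR_nonneg_nonpos scaleR_nonpos_nonpos scaleR_nonpos_nonneg\<close>)
      also have "\<dots> = (- r) * band g u (- nprt x) - (- r) * band g u (pprt x)"
        using band_scale[OF r, of "pprt x"] band_scale[OF r, of "- nprt x"] by simp
      also have "\<dots> = r *\<^sub>R bandf g u x" by (simp add: bf algebra_simps)
      finally show ?thesis .
    qed
  next
    fix x :: 'y
    show "norm (bandf g u x) \<le> norm x * \<bar>K\<bar>"
    proof -
      have "\<bar>bandf g u x\<bar> \<le> g (lmod x)" by (rule bandf_abs)
      also have "\<dots> \<le> norm (lmod x) * K" using K[of "lmod x"] by simp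
      also have "\<dots> \<le> norm x * \<bar>K\<bar>" by (simp add: norm_lmod mult_left_mono)
      finally show "norm (bandf g u x) \<le> norm x * \<bar>K\<bar>" by simp
    qed
  qed
qed

lemma bandf_pos: "positive_functional (bandf g u)"
  unfolding positive_functional_def bandf_def
  by (auto simp: band_nonneg band_0)

end

lemma bandf_split:
  fixes g :: "'y::banach_lattice \<Rightarrow> real"
  assumes "bounded_linear g" "positive_functional g"
  shows "g (lmod y) = \<bar>bandf g (pprt y) y\<bar> + \<bar>bandf g (- nprt y) y\<bar>"
proof -
  interpret A: posfun g "pprt y" by (rule posfun.intro[OF assms]) simp
  interpret B: posfun g "- nprt y" by (rule posfun.intro[OF assms]) simp
  have i1: "inf (pprt y) (- nprt y) = 0" by (rule inf_prts)
  have i2: "inf (- nprt y) (pprt y) = 0" using i1 by (simp add: inf.commute)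
  have "bandf g (pprt y) y = g (pprt y)"
    unfolding bandf_def using A.band_self A.band_disj[OF _ i2] by simp
  moreover have "bandf g (- nprt y) y = - g (- nprt y)"
    unfolding bandf_def using B.band_self B.band_disj[OF _ i1] by simp
  ultimately show ?thesis using A.gnonneg[of "pprt y"] A.gnonneg[of "- nprt y"]
    by (simp add: lmod_prts A.gdiff A.gminus)
qed



definition rok :: "ereal \<Rightarrow> bool" where "rok r \<longleftrightarrow> r = \<infinity> \<or> 0 < real_of_ereal r"

lemma conj_rok: "1 \<le> p \<Longrightarrow> rok (conj_exp p)"
proof -
  assume p: "1 \<le> p"
  show ?thesis
  proof (cases "p = 1 \<or> p = \<infinity>")
    case True then show ?thesis by (auto simp: rok_def conj_exp_def)
  next
    case False
    then obtain x where x: "p = ereal x" "x > 1" using p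
      by (cases p) auto
    then show ?thesis using False by (simp add: rok_def conj_exp_def)
  qed
qed

lemma lpnorm_nonneg: "0 \<le> lpnorm r n x"
  unfolding lpnorm_def by (auto intro: Max_ge order_trans[OF _ Max_ge])

lemma lpnorm_mono:
  assumes r: "rok r" and le: "\<And>i. i < n \<Longrightarrow> norm (a i) \<le> norm (b i)"
  shows "lpnorm r n a \<le> lpnorm r n b"
proof (cases "r = \<infinity>")
  case True
  have "Max (insert 0 ((\<lambda>i. norm (a i)) ` {..<n})) \<le> Max (insert 0 ((\<lambda>i. norm (b i)) ` {..<n}))"
  proof (rule Max.boundedI)
    fix z assume "z \<in> insert 0 ((\<lambda>i. norm (a i)) ` {..<n})"
    then show "z \<le> Max (insert 0 ((\<lambda>i. norm (b i)) ` {..<n}))"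
    proof
      assume "z = 0" then show ?thesis by (auto intro: Max_ge)
    next
      assume "z \<in> (\<lambda>i. norm (a i)) ` {..<n}"
      then obtain i where "i < n" "z = norm (a i)" by auto
      then show ?thesis using le[of i] by (auto intro: order_trans[OF _ Max_ge])
    qed
  qed auto
  then show ?thesis unfolding lpnorm_def using True by simp
next
  case False
  then have s: "0 < real_of_ereal r" using r by (simp add: rok_def)
  show ?thesis unfolding lpnorm_def using False s le
    by (auto intro!: powr_mono2 sum_mono sum_nonneg)
qed

lemma lpnorm_comp:
  assumes r: "rok r" and i: "i < n"
  shows "norm (a i) \<le> lpnorm r n a"
proof (cases "r = \<infinity>")
  case True then show ?thesis unfolding lpnorm_def using i by (auto intro: Max_ge)
next
  case False
  then have s: "0 < real_of_ereal r" using r by (simp add: rok_def)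
  let ?s = "real_of_ereal r"
  have "norm (a i) = (norm (a i) powr ?s) powr (1 / ?s)" using s by (simp add: powr_powr)
  also have "\<dots> \<le> (\<Sum>j<n. norm (a j) powr ?s) powr (1 / ?s)"
    using s i by (intro powr_mono2) (auto intro!: member_le_sum)
  finally show ?thesis unfolding lpnorm_def using False by simp
qed

lemma lpnorm_scale:
  assumes r: "rok r" and c: "0 \<le> c"
  shows "lpnorm r n (\<lambda>i. c * (a i :: real)) \<le> c * lpnorm r n a"
proof (cases "r = \<infinity>")
  case True
  have "Max (insert 0 ((\<lambda>i. norm (c * a i)) ` {..<n})) \<le> c * Max (insert 0 ((\<lambda>i. norm (a i)) ` {..<n}))"
  proof (rule Max.boundedI)
    fix z assume "z \<in> insert 0 ((\<lambda>i. norm (c * a i)) ` {..<n})"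
    then show "z \<le> c * Max (insert 0 ((\<lambda>i. norm (a i)) ` {..<n}))"
    proof
      assume "z = 0" then show ?thesis using c by (auto intro: Max_ge)
    next
      assume "z \<in> (\<lambda>i. norm (c * a i)) ` {..<n}"
      then obtain i where "i < n" "z = \<bar>c * a i\<bar>" by auto
      then show ?thesis using c by (auto simp: abs_mult intro!: mult_left_mono Max_ge)
    qed
  qed auto
  then show ?thesis unfolding lpnorm_def using True by simp
next
  case False
  then have s: "0 < real_of_ereal r" using r by (simp add: rok_def)
  let ?s = "real_of_ereal r"
  have "(\<Sum>i<n. \<bar>c * a i\<bar> powr ?s) = c powr ?s * (\<Sum>i<n. \<bar>a i\<bar> powr ?s)"
    using c by (simp add: abs_mult powr_mult sum_distrib_left)
  then have "(\<Sum>i<n. \<bar>c * a i\<bar> powr ?s) powr (1 / ?s) = (c powr ?s) powr (1/?s) * (\<Sum>i<n. \<bar>a i\<bar> powr ?s) powr (1 / ?s)"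
    using c by (simp add: powr_mult sum_nonneg)
  also have "(c powr ?s) powr (1/?s) = c" using s c by (simp add: powr_powr)
  finally show ?thesis unfolding lpnorm_def using False by simp
qed

lemma lpnorm_one: "lpnorm 1 n x = (\<Sum>i<n. norm (x i))"
  unfolding lpnorm_def by (simp add: sum_nonneg)

lemma dual_bound:
  assumes "\<forall>i<n. dual_elem (f i)"
  obtains K where "\<And>i y. i < n \<Longrightarrow> \<bar>f i y\<bar> \<le> norm y * K i" "\<And>i. 0 \<le> K i"
proof -
  have "\<forall>i. \<exists>K. i < n \<longrightarrow> (\<forall>y. \<bar>f i y\<bar> \<le> norm y * K) \<and> 0 \<le> K"
  proof
    fix i
    show "\<exists>K. i < n \<longrightarrow> (\<forall>y. \<bar>f i y\<bar> \<le> norm y * K) \<and> 0 \<le> K"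
    proof (cases "i < n")
      case True
      then have "bounded_linear (f i)" using assms by (simp add: dual_elem_def)
      then obtain K where "\<And>y. norm (f i y) \<le> norm y * K" "K > 0"
        using bounded_linear.pos_bounded by blast
      then show ?thesis by (intro exI[of _ K]) auto
    qed auto
  qed
  then obtain K where "\<forall>i. i < n \<longrightarrow> (\<forall>y. \<bar>f i y\<bar> \<le> norm y * K i) \<and> 0 \<le> K i"
    by metis
  then show ?thesis using that[of "\<lambda>i. if i < n then K i else 0"] by auto
qed

lemma weak_bdd:
  assumes r: "rok r" and f: "\<forall>i<n. dual_elem (f i)" and A: "\<forall>y\<in>A. norm y \<le> 1"
  shows "bdd_above ((\<lambda>y. lpnorm r n (\<lambda>i. f i y)) ` A)"
proof -
  obtain K where K: "\<And>i y. i < n \<Longrightarrow> \<bar>f i y\<bar> \<le> norm y * K i" "\<And>i. 0 \<le> K i"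
    using dual_bound[OF f] by blast
  show ?thesis
  proof (rule bdd_aboveI2)
    fix y assume y: "y \<in> A"
    show "lpnorm r n (\<lambda>i. f i y) \<le> lpnorm r n K"
    proof (rule lpnorm_mono[OF r])
      fix i assume i: "i < n"
      have "\<bar>f i y\<bar> \<le> norm y * K i" using K(1)[OF i] .
      also have "\<dots> \<le> K i" using A y K(2)[of i] by (simp add: mult_left_le_one_le)
      finally show "norm (f i y) \<le> norm (K i)" using K(2)[of i] by simp
    qed
  qed
qed

lemma weak_comp:
  assumes r: "rok r" and f: "\<forall>i<n. dual_elem (f i)" and i: "i < n"
  shows "\<bar>f i y\<bar> \<le> weak_norm r n f * norm y"
proof (cases "y = 0")
  case True
  have "bounded_linear (f i)" using f i by (simp add: dual_elem_def)
  then show ?thesis using True by (simp add: real_vector.linear_0[OF bounded_linear.linear])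
next
  case False
  let ?y = "y /\<^sub>R norm y"
  have bl: "bounded_linear (f i)" using f i by (simp add: dual_elem_def)
  have ny: "norm ?y \<le> 1" using False by simp
  have "\<bar>f i ?y\<bar> \<le> lpnorm r n (\<lambda>j. f j ?y)" using lpnorm_comp[OF r i, of "\<lambda>j. f j ?y"] by simp
  also have "\<dots> \<le> weak_norm r n f" unfolding weak_norm_def
    by (rule cSUP_upper) (use ny weak_bdd[OF r f, of "{y. norm y \<le> 1}"] in auto)
  finally have "\<bar>f i y\<bar> / norm y \<le> weak_norm r n f"
    using linear_cmul[OF bounded_linear.linear[OF bl], of "inverse (norm y)" y]
    by (simp add: abs_mult divide_inverse mult.commute)
  then show ?thesis using False by (simp add: divide_le_eq)
qed

lemma absw_comp:
  fixes f :: "nat \<Rightarrow> 'y::banach_lattice \<Rightarrow> real"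
  assumes r: "rok r" and f: "\<forall>i<n. dual_elem (f i)" and i: "i < n" and y0: "0 \<le> y"
  shows "\<bar>f i y\<bar> \<le> abs_weak_norm_pos r n f * norm y"
proof (cases "y = 0")
  case True
  have "bounded_linear (f i)" using f i by (simp add: dual_elem_def)
  then show ?thesis using True by (simp add: real_vector.linear_0[OF bounded_linear.linear])
next
  case False
  let ?y = "y /\<^sub>R norm y"
  have bl: "bounded_linear (f i)" using f i by (simp add: dual_elem_def)
  have ny: "norm ?y \<le> 1" "0 \<le> ?y" using False y0 scaleR_nonneg_nonneg[of "inverse (norm y)" y] by simp_all
  have "\<bar>f i ?y\<bar> \<le> lpnorm r n (\<lambda>j. f j ?y)" using lpnorm_comp[OF r i, of "\<lambda>j. f j ?y"] by simp
  also have "\<dots> \<le> abs_weak_norm_pos r n f" unfolding abs_weak_norm_pos_def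
    by (rule cSUP_upper) (use ny weak_bdd[OF r f, of "{y. norm y \<le> 1 \<and> 0 \<le> y}"] in auto)
  finally have "\<bar>f i y\<bar> / norm y \<le> abs_weak_norm_pos r n f"
    using linear_cmul[OF bounded_linear.linear[OF bl], of "inverse (norm y)" y]
    by (simp add: abs_mult divide_inverse mult.commute)
  then show ?thesis using False by (simp add: divide_le_eq)
qed



lemma pos_abs_le:
  fixes g :: "'y::banach_lattice \<Rightarrow> real"
  assumes "bounded_linear g" "positive_functional g"
  shows "\<bar>g y\<bar> \<le> g (lmod y)"
proof -
  interpret A: posfun g 0 by (rule posfun.intro[OF assms]) simp
  have "g y = g (pprt y) + g (nprt y)" using prts[of y] A.gadd by metis
  moreover have "g (lmod y) = g (pprt y) - g (nprt y)" by (simp add: lmod_prts A.gdiff)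
  moreover have "0 \<le> g (pprt y)" "0 \<le> - g (nprt y)"
    using A.gnonneg[of "pprt y"] A.gnonneg[of "- nprt y"] by (simp_all add: A.gminus)
  ultimately show ?thesis by linarith
qed

lemma weak_nonneg:
  assumes r: "rok r" and f: "\<forall>i<n. dual_elem (f i)"
  shows "0 \<le> weak_norm r n f"
proof -
  have "lpnorm r n (\<lambda>i. f i 0) \<le> weak_norm r n f" unfolding weak_norm_def
    by (rule cSUP_upper) (use weak_bdd[OF r f, of "{y. norm y \<le> 1}"] in auto)
  then show ?thesis using lpnorm_nonneg order_trans by blast
qed

lemma lpnorm_zero: "lpnorm r n (\<lambda>i. 0 :: 'a::real_normed_vector) = 0"
proof (cases "n = 0")
  case True then show ?thesis by (simp add: lpnorm_def)
next
  case False
  then have "(\<lambda>i. norm (0::'a)) ` {..<n} = {0}" by auto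
  then show ?thesis by (simp add: lpnorm_def)
qed

theorem lemma3p1:
  fixes T :: "'e::banach \<Rightarrow> 'y::banach_lattice"
    and p q :: ereal
  assumes "1 \<le> q" and "q \<le> p"
    and "bounded_linear T"
  shows "pos_strongly_summing p q T \<longleftrightarrow>
         (\<exists>C>0. \<forall>n (x :: nat \<Rightarrow> 'e).
            lp_pi_norm p n (\<lambda>i. T (x i)) \<le> C * lpnorm q n x)"
proof -
  obtain K where K: "\<And>x. norm (T x) \<le> norm x * K" "K > 0"
    using assms(3) bounded_linear.pos_bounded by blast
  have p1: "1 \<le> p" using assms(1,2) by simp
  have r: "rok (conj_exp p)" using conj_rok[OF p1] .
  show ?thesis
  proof (cases "p = 1")
    case True
    then have q1: "q = 1" using assms(1,2) by simp
    have L: "pos_strongly_summing p q T"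
      unfolding pos_strongly_summing_def
    proof (intro exI[of _ K] conjI allI impI)
      fix n and x :: "nat \<Rightarrow> 'e" and ys :: "nat \<Rightarrow> 'y \<Rightarrow> real"
      assume ys: "\<forall>i<n. dual_elem (ys i) \<and> positive_functional (ys i)"
      have ysd: "\<forall>i<n. dual_elem (ys i)" using ys by simp
      let ?W = "weak_norm (conj_exp p) n ys"
      have W0: "0 \<le> ?W" by (rule weak_nonneg[OF r ysd])
      have "(\<Sum>i<n. \<bar>ys i (T (x i))\<bar>) \<le> (\<Sum>i<n. ?W * (norm (x i) * K))"
      proof (rule sum_mono)
        fix i assume "i \<in> {..<n}"
        then have "\<bar>ys i (T (x i))\<bar> \<le> ?W * norm (T (x i))" using weak_comp[OF r ysd] by simp
        also have "\<dots> \<le> ?W * (norm (x i) * K)" using W0 K(1) by (simp add: mult_left_mono)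
        finally show "\<bar>ys i (T (x i))\<bar> \<le> ?W * (norm (x i) * K)" .
      qed
      also have "\<dots> = K * lpnorm q n x * ?W"
        by (simp add: q1 lpnorm_one sum_distrib_left sum_distrib_right algebra_simps)
      finally show "(\<Sum>i<n. \<bar>ys i (T (x i))\<bar>) \<le> K * lpnorm q n x * ?W" .
    qed (use K in simp)
    have R: "\<exists>C>0. \<forall>n (x :: nat \<Rightarrow> 'e). lp_pi_norm p n (\<lambda>i. T (x i)) \<le> C * lpnorm q n x"
    proof (intro exI[of _ K] conjI allI)
      fix n and x :: "nat \<Rightarrow> 'e"
      have "lp_pi_norm p n (\<lambda>i. T (x i)) = (\<Sum>i<n. norm (T (x i)))"
        using True by (simp add: lp_pi_norm_def)
      also have "\<dots> \<le> (\<Sum>i<n. norm (x i) * K)" by (rule sum_mono) (use K in auto)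
      also have "\<dots> = K * lpnorm q n x" by (simp add: q1 lpnorm_one sum_distrib_left algebra_simps)
      finally show "lp_pi_norm p n (\<lambda>i. T (x i)) \<le> K * lpnorm q n x" .
    qed (use K in simp)
    show ?thesis using L R by blast
  next
    case False
    let ?r = "conj_exp p"
    define G where "G n = {g :: nat \<Rightarrow> 'y \<Rightarrow> real. (\<forall>i. dual_elem (g i) \<and> positive_functional (g i))
                      \<and> (\<forall>i\<ge>n. g i = (\<lambda>_. 0))
                      \<and> abs_weak_norm_pos ?r n g \<le> 1}" for n
    have lpdef: "lp_pi_norm p n y = (SUP g\<in>G n. \<Sum>i<n. g i (lmod (y i)))" for n y
      using False by (simp add: lp_pi_norm_def G_def)
    have zeroG: "(\<lambda>i _. 0) \<in> G n" for n
    proof -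
      have "abs_weak_norm_pos ?r n (\<lambda>i (_::'y). 0 :: real) = 0"
        unfolding abs_weak_norm_pos_def lpnorm_zero
        by (rule cSUP_const) (auto intro: exI[of _ 0])
      then show ?thesis unfolding G_def
        by (simp add: dual_elem_def positive_functional_def bounded_linear_zero)
    qed
    have Gbdd: "bdd_above ((\<lambda>g. \<Sum>i<n. g i (lmod (y i))) ` G n)" for n y
    proof (rule bdd_aboveI2)
      fix g assume g: "g \<in> G n"
      have gd: "\<forall>i<n. dual_elem (g i)" using g by (simp add: G_def)
      show "(\<Sum>i<n. g i (lmod (y i))) \<le> (\<Sum>i<n. norm (y i))"
      proof (rule sum_mono)
        fix i assume i: "i \<in> {..<n}"
        have "g i (lmod (y i)) \<le> abs_weak_norm_pos ?r n g * norm (lmod (y i))"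
          using absw_comp[OF r gd, of i "lmod (y i)"] i lmod_nonneg[of "y i"] by simp
        also have "\<dots> \<le> 1 * norm (y i)"
          unfolding norm_lmod using g by (intro mult_right_mono) (auto simp: G_def)
        finally show "g i (lmod (y i)) \<le> norm (y i)" by simp
      qed
    qed
    show ?thesis
    proof
      assume "pos_strongly_summing p q T"
      then obtain C where C: "C > 0" and H: "\<And>n (x :: nat \<Rightarrow> 'e) (ys :: nat \<Rightarrow> 'y \<Rightarrow> real).
        (\<forall>i<n. dual_elem (ys i) \<and> positive_functional (ys i)) \<Longrightarrow>
        (\<Sum>i<n. \<bar>ys i (T (x i))\<bar>) \<le> C * lpnorm q n x * weak_norm ?r n ys"
        unfolding pos_strongly_summing_def by blast
      show "\<exists>C>0. \<forall>n (x :: nat \<Rightarrow> 'e). lp_pi_norm p n (\<lambda>i. T (x i)) \<le> C * lpnorm q n x"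
      proof (intro exI[of _ "2 * C"] conjI allI)
        fix n and x :: "nat \<Rightarrow> 'e"
        have lq: "0 \<le> lpnorm q n x" by (rule lpnorm_nonneg)
        show "lp_pi_norm p n (\<lambda>i. T (x i)) \<le> 2 * C * lpnorm q n x"
          unfolding lpdef
        proof (rule cSUP_least)
          show "G n \<noteq> {}" using zeroG by blast
        next
          fix g assume g: "g \<in> G n"
          have gp: "bounded_linear (g i)" "positive_functional (g i)" for i
            using g by (auto simp: G_def dual_elem_def)
          have gd: "\<forall>i<n. dual_elem (g i)" using g by (simp add: G_def)
          have ag: "abs_weak_norm_pos ?r n g \<le> 1" using g by (simp add: G_def)
          have band_ok: "(\<forall>i<n. dual_elem (h i) \<and> positive_functional (h i)) \<and> weak_norm ?r n h \<le> 1"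
            if hdef: "\<And>i. h i = bandf (g i) (u i)" and u: "\<And>i. 0 \<le> u i" for h u
          proof
            have pf: "posfun (g i) (u i)" for i by (rule posfun.intro[OF gp u])
            show "\<forall>i<n. dual_elem (h i) \<and> positive_functional (h i)"
              using posfun.bandf_bl[OF pf] posfun.bandf_pos[OF pf] hdef
              by (simp add: dual_elem_def)
            have hd: "\<forall>i<n. dual_elem (h i)"
              using posfun.bandf_bl[OF pf] hdef by (simp add: dual_elem_def)
            show "weak_norm ?r n h \<le> 1" unfolding weak_norm_def
            proof (rule cSUP_least)
              show "{y :: 'y. norm y \<le> 1} \<noteq> {}" by (auto intro: exI[of _ 0])
            next
              fix y :: 'y assume y: "y \<in> {y. norm y \<le> 1}"
              have "lpnorm ?r n (\<lambda>i. h i y) \<le> lpnorm ?r n (\<lambda>i. g i (lmod y))"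
              proof (rule lpnorm_mono[OF r])
                fix i assume "i < n"
                have "\<bar>h i y\<bar> \<le> g i (lmod y)" using posfun.bandf_abs[OF pf] hdef by simp
                moreover have "0 \<le> g i (lmod y)" using posfun.gnonneg[OF pf] lmod_nonneg by blast
                ultimately show "norm (h i y) \<le> norm (g i (lmod y))" by simp
              qed
              also have "\<dots> \<le> abs_weak_norm_pos ?r n g" unfolding abs_weak_norm_pos_def
                by (rule cSUP_upper)
                  (use y weak_bdd[OF r gd, of "{y. norm y \<le> 1 \<and> 0 \<le> y}"] in \<open>auto simp: norm_lmod lmod_nonneg\<close>)
              also have "\<dots> \<le> 1" by (rule ag)
              finally show "lpnorm ?r n (\<lambda>i. h i y) \<le> 1" .
            qed
          qed
          define h where "h i = bandf (g i) (pprt (T (x i)))" for i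
          define k where "k i = bandf (g i) (- nprt (T (x i)))" for i
          have hok: "(\<forall>i<n. dual_elem (h i) \<and> positive_functional (h i)) \<and> weak_norm ?r n h \<le> 1"
            by (rule band_ok[of h "\<lambda>i. pprt (T (x i))"]) (simp_all add: h_def)
          have kok: "(\<forall>i<n. dual_elem (k i) \<and> positive_functional (k i)) \<and> weak_norm ?r n k \<le> 1"
            by (rule band_ok[of k "\<lambda>i. - nprt (T (x i))"]) (simp_all add: k_def)
          have "(\<Sum>i<n. g i (lmod (T (x i)))) = (\<Sum>i<n. \<bar>h i (T (x i))\<bar>) + (\<Sum>i<n. \<bar>k i (T (x i))\<bar>)"
            using bandf_split[OF gp] by (simp add: h_def k_def sum.distrib)
          also have "\<dots> \<le> C * lpnorm q n x * weak_norm ?r n h + C * lpnorm q n x * weak_norm ?r n k"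
            using H hok kok by (intro add_mono) auto
          also have "\<dots> \<le> C * lpnorm q n x * 1 + C * lpnorm q n x * 1"
            using hok kok C lq by (intro add_mono mult_left_mono) auto
          finally show "(\<Sum>i<n. g i (lmod (T (x i)))) \<le> 2 * C * lpnorm q n x" by simp
        qed
      qed (use C in simp)
    next
      assume "\<exists>C>0. \<forall>n (x :: nat \<Rightarrow> 'e). lp_pi_norm p n (\<lambda>i. T (x i)) \<le> C * lpnorm q n x"
      then obtain C where C: "C > 0" and H: "\<And>n (x :: nat \<Rightarrow> 'e). lp_pi_norm p n (\<lambda>i. T (x i)) \<le> C * lpnorm q n x"
        by blast
      show "pos_strongly_summing p q T" unfolding pos_strongly_summing_def
      proof (intro exI[of _ C] conjI allI impI)
        fix n and x :: "nat \<Rightarrow> 'e" and ys :: "nat \<Rightarrow> 'y \<Rightarrow> real"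
        assume ys: "\<forall>i<n. dual_elem (ys i) \<and> positive_functional (ys i)"
        have ysd: "\<forall>i<n. dual_elem (ys i)" using ys by simp
        let ?W = "weak_norm ?r n ys"
        have W0: "0 \<le> ?W" by (rule weak_nonneg[OF r ysd])
        have lq: "0 \<le> lpnorm q n x" by (rule lpnorm_nonneg)
        show "(\<Sum>i<n. \<bar>ys i (T (x i))\<bar>) \<le> C * lpnorm q n x * ?W"
        proof (cases "?W = 0")
          case True
          have "(\<Sum>i<n. \<bar>ys i (T (x i))\<bar>) \<le> (\<Sum>i<n. 0)"
            using weak_comp[OF r ysd] True by (intro sum_mono) fastforce
          then show ?thesis using True by simp
        next
          case False
          then have Wp: "?W > 0" using W0 by simp
          define g where "g i = (if i < n then (\<lambda>z. ys i z / ?W) else (\<lambda>_. 0))" for i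
          have gG: "g \<in> G n"
          proof -
            have "dual_elem (g i) \<and> positive_functional (g i)" for i
            proof (cases "i < n")
              case True
              then have "bounded_linear (ys i)" "positive_functional (ys i)"
                using ys by (auto simp: dual_elem_def)
              then show ?thesis using True Wp
                by (auto simp: g_def dual_elem_def positive_functional_def
                    intro!: bounded_linear_compose[OF bounded_linear_divide])
            qed (simp add: g_def dual_elem_def positive_functional_def bounded_linear_zero)
            moreover have "abs_weak_norm_pos ?r n g \<le> 1" unfolding abs_weak_norm_pos_def
            proof (rule cSUP_least)
              show "{y :: 'y. norm y \<le> 1 \<and> 0 \<le> y} \<noteq> {}" by (auto intro: exI[of _ 0])
            next
              fix y :: 'y assume y: "y \<in> {y. norm y \<le> 1 \<and> 0 \<le> y}"
              have "lpnorm ?r n (\<lambda>i. g i y) \<le> lpnorm ?r n (\<lambda>i. inverse ?W * ys i y)"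
                by (rule lpnorm_mono[OF r]) (simp add: g_def divide_inverse mult.commute)
              also have "\<dots> \<le> inverse ?W * lpnorm ?r n (\<lambda>i. ys i y)"
                by (rule lpnorm_scale[OF r]) (use Wp in simp)
              also have "\<dots> \<le> inverse ?W * ?W"
              proof (rule mult_left_mono)
                show "lpnorm ?r n (\<lambda>i. ys i y) \<le> ?W" unfolding weak_norm_def
                  by (rule cSUP_upper) (use y weak_bdd[OF r ysd, of "{y. norm y \<le> 1}"] in auto)
              qed (use Wp in simp)
              also have "\<dots> = 1" using Wp by simp
              finally show "lpnorm ?r n (\<lambda>i. g i y) \<le> 1" .
            qed
            ultimately show ?thesis unfolding G_def by (auto simp: g_def)
          qed
          have "(\<Sum>i<n. \<bar>ys i (T (x i))\<bar>) \<le> (\<Sum>i<n. ys i (lmod (T (x i))))"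
            using ys pos_abs_le by (intro sum_mono) (auto simp: dual_elem_def)
          also have "\<dots> = ?W * (\<Sum>i<n. g i (lmod (T (x i))))"
            using Wp by (simp add: g_def sum_distrib_left)
          also have "\<dots> \<le> ?W * lp_pi_norm p n (\<lambda>i. T (x i))"
            unfolding lpdef
            by (rule mult_left_mono[OF cSUP_upper[OF gG Gbdd] W0])
          also have "\<dots> \<le> ?W * (C * lpnorm q n x)" using H W0 by (intro mult_left_mono) auto
          finally show ?thesis by (simp add: algebra_simps)
        qed
      qed (use C in simp)
    qed
  qed
qed


end
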